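(* In the setting below, assume that $g(x)$ and $l(x)$ are self-reciprocal. If $\gcd\big(r_{22}(x),\ g_{11}(x)\bar g_{12}(x)-g_{12}(x)\bar g_{11}(x)\big)\neq 1$, then $C$ is not symplectic LCD.
   Context: Let $q$ be a prime power, $F=\mathbb{F}_q$, $m\ge1$ with $\gcd(q,m)=1$, and $R=F[x]/\langle x^m-1\rangle$; elements of $R$ are represented by polynomials of degree $<m$ and identified with their coefficient vectors in $F^m$. A quasi-cyclic code of length $2m$ and index $2$ is an $R$-submodule $C\subseteq R^2$. For $a,b\in R$ let $\langle a,b\rangle_e$ be the standard dot product of their coefficient vectors. The symplectic form on $R^2$ is $\langle (a_1,a_2),(b_1,b_2)\rangle_s=\langle a_1,b_2\rangle_e-\langle a_2,b_1\rangle_e$; $C$ is symplectic LCD if $C\cap C^{\perp_s}=\{0\}$. For a nonzero polynomial $f$ of degree $k$, $f^*(x)=x^kf(x^{-1})$; $f$ is self-reciprocal if $f^*=\alpha f$ for some $\alpha\in F$. For a polynomial $f$ of degree at most $m$, $\bar f(x)=x^m f(x^{-1})$. Suppose $C$ is generated as an $R$-module by $(g_{11}(x),g_{12}(x))$ and $(0,g_{22}(x))$, where $g_{11},g_{12},g_{22}\in F[x]$ satisfy: $g_{11}\mid x^m-1$, $g_{22}\mid x^m-1$, $\deg g_{12}<\deg g_{22}$, and $g_{11}g_{22}\mid (x^m-1)g_{12}$. Define $g=\gcd(g_{11},g_{22})$, $l=(x^m-1)/\mathrm{lcm}(g_{11},g_{22})$, $g_{22}=g\,g_{22}'$, $r_{22}=\gcd(g_{22}',g_{22}'^*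 )$. *)

theory Defs
  imports "HOL-Computational_Algebra.Computational_Algebra"
begin

definition xm1 :: "nat \<Rightarrow> 'a::field poly" where
  "xm1 m = monom 1 m - 1"

text \<open>Elements of R = F[x]/(x^m-1), represented by polynomials of degree < m.\<close>
definition Rset :: "nat \<Rightarrow> 'a::field poly set" where
  "Rset m = {p. degree p < m}"

definition euc :: "nat \<Rightarrow> 'a::field poly \<Rightarrow> 'a poly \<Rightarrow> 'a" where
  "euc m a b = (\<Sum>i<m. coeff a i * coeff b i)"

definition symp :: "nat \<Rightarrow> 'a::field poly \<times> 'a poly \<Rightarrow> 'a poly \<times> 'a poly \<Rightarrow> 'a" where
  "symp m a b = euc m (fst a) (snd b) - euc m (snd a) (fst b)"

definition qc_code :: "nat \<Rightarrow> 'a::field poly \<Rightarrow> 'a poly \<Rightarrow> 'a poly \<Rightarrow> ('a poly \<times> 'a poly) set" where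
  "qc_code m g11 g12 g22 =
     {((u * g11) mod xm1 m, (u * g12 + v * g22) mod xm1 m) | u v. True}"

definition symp_dual :: "nat \<Rightarrow> ('a::field poly \<times> 'a poly) set \<Rightarrow> ('a poly \<times> 'a poly) set" where
  "symp_dual m C = {b \<in> Rset m \<times> Rset m. \<forall>a\<in>C. symp m a b = 0}"

definition symplectic_LCD :: "nat \<Rightarrow> ('a::field poly \<times> 'a poly) set \<Rightarrow> bool" where
  "symplectic_LCD m C \<longleftrightarrow> C \<inter> symp_dual m C = {(0, 0)}"

text \<open>f^*(x) = x^{deg f} f(1/x) is the library's reflect_poly.\<close>
definition self_reciprocal :: "'a::field poly \<Rightarrow> bool" where
  "self_reciprocal f \<longleftrightarrow> f \<noteq> 0 \<and> (\<exists>\<alpha>. reflect_poly f = smult \<alpha> f)"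

text \<open>bar f(x) = x^m f(1/x) for deg f \<le> m.\<close>
definition barpoly :: "nat \<Rightarrow> 'a::field poly \<Rightarrow> 'a poly" where
  "barpoly m f = (\<Sum>i\<le>m. monom (coeff f (m - i)) i)"

end

theory Submission
  imports Defs
begin


lemma coeff_barpoly: "coeff (barpoly n f) i = (if i \<le> n then coeff f (n - i) else 0)"
  unfolding barpoly_def by (simp add: coeff_sum coeff_monom)

lemma barpoly_0[simp]: "barpoly n 0 = 0"
  by (rule poly_eqI) (simp add: coeff_barpoly)

lemma barpoly_diff: "barpoly n (f - g) = barpoly n f - barpoly n g"
  by (rule poly_eqI) (simp add: coeff_barpoly)

lemma degree_barpoly: "degree (barpoly n f) \<le> n"
  by (rule degree_le) (simp add: coeff_barpoly)

lemma barpoly_reflect: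
  assumes "degree f \<le> n"
  shows "barpoly n f = monom 1 (n - degree f) * reflect_poly f"
proof (rule poly_eqI)
  fix i
  show "coeff (barpoly n f) i = coeff (monom 1 (n - degree f) * reflect_poly f) i"
    using assms by (auto simp: coeff_barpoly coeff_monom_mult coeff_reflect_poly coeff_eq_0)
qed

lemma barpoly_mult:
  fixes f g :: "'a::field poly"
  assumes "degree f \<le> a" "degree g \<le> b"
  shows "barpoly (a + b) (f * g) = barpoly a f * barpoly b g"
proof (cases "f = 0 \<or> g = 0")
  case True then show ?thesis by auto
next
  case False
  then have d: "degree (f*g) = degree f + degree g" by (simp add: degree_mult_eq)
  have "barpoly (a + b) (f * g) = monom 1 (a + b - degree (f*g)) * (reflect_poly f * reflect_poly g)"
    using assms d by (simp add: barpoly_reflect reflect_poly_mult)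
  also have "\<dots> = (monom 1 (a - degree f) * reflect_poly f) * (monom 1 (b - degree g) * reflect_poly g)"
    using assms d by (simp add: mult_monom mult_ac)
  also have "\<dots> = barpoly a f * barpoly b g"
    using assms by (simp add: barpoly_reflect)
  finally show ?thesis .
qed

lemma barpoly_barpoly:
  assumes "degree f \<le> n" shows "barpoly n (barpoly n f) = f"
proof (rule poly_eqI)
  fix i show "coeff (barpoly n (barpoly n f)) i = coeff f i"
    using assms by (auto simp: coeff_barpoly coeff_eq_0)
qed

lemma barpoly_shift:
  assumes "degree f \<le> n"
  shows "barpoly (n + k) f = monom 1 k * barpoly n f"
proof (rule poly_eqI)
  fix i show "coeff (barpoly (n + k) f) i = coeff (monom 1 k * barpoly n f) i"
    using assms by (auto simp: coeff_barpoly coeff_monom_mult coeff_eq_0)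
qed

lemma coeff_xm1: "coeff (xm1 m) i = (if i = m then 1 else 0) - (if i = 0 then 1 else 0)"
  unfolding xm1_def by (simp add: coeff_monom)

lemma degree_xm1: assumes "m \<ge> 1" shows "degree (xm1 m :: 'a::field poly) = m"
proof -
  have "degree (xm1 m :: 'a poly) \<le> m" by (rule degree_le) (auto simp: coeff_xm1)
  moreover have "coeff (xm1 m :: 'a poly) m \<noteq> 0" using assms by (simp add: coeff_xm1)
  ultimately show ?thesis by (simp add: le_antisym le_degree)
qed

lemma xm1_nz: "m \<ge> 1 \<Longrightarrow> xm1 m \<noteq> (0::'a::field poly)"
  using degree_xm1[of m] by (metis degree_0 not_one_le_zero)

lemma reflect_xm1: assumes "m \<ge> 1" shows "reflect_poly (xm1 m :: 'a::field poly) = - xm1 m"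
proof (rule poly_eqI)
  fix i show "coeff (reflect_poly (xm1 m :: 'a poly)) i = coeff (- xm1 m) i"
    using assms by (auto simp: coeff_reflect_poly degree_xm1 coeff_xm1)
qed

lemma poly_xm1_0: "m \<ge> 1 \<Longrightarrow> poly (xm1 m :: 'a::field poly) 0 = -1"
  by (simp add: poly_0_coeff_0 coeff_xm1)

lemma mod_xm1_coeff0:
  fixes P :: "'a::field poly"
  assumes m: "m \<ge> 1" and dP: "degree P < 2 * m"
  shows "coeff (P mod xm1 m) 0 = coeff P 0 + coeff P m"
proof -
  define Q where "Q = (\<Sum>i<m. monom (coeff P i) i)"
  define R where "R = (\<Sum>i<m. monom (coeff P (m + i)) i)"
  have cQ: "coeff Q k = (if k < m then coeff P k else 0)" for k
    unfolding Q_def by (simp add: coeff_sum coeff_monom)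
  have cR: "coeff R k = (if k < m then coeff P (m + k) else 0)" for k
    unfolding R_def by (simp add: coeff_sum coeff_monom)
  have PQR: "P = Q + monom 1 m * R"
  proof (rule poly_eqI)
    fix k
    show "coeff P k = coeff (Q + monom 1 m * R) k"
      using dP by (auto simp: cQ cR coeff_monom_mult coeff_eq_0)
  qed
  have P2: "P = (Q + R) + xm1 m * R"
    unfolding PQR xm1_def by (simp add: algebra_simps)
  have dQR: "degree (Q + R) < degree (xm1 m :: 'a poly)"
  proof -
    have "degree (Q + R) \<le> m - 1" by (rule degree_le) (auto simp: cQ cR)
    then show ?thesis using m degree_xm1[OF m, where 'a='a] by linarith
  qed
  have "P mod xm1 m = Q + R"
    using dQR by (simp add: P2 mod_poly_less)
  then show ?thesis using m by (simp add: cQ cR)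
qed

lemma euc_as_mod:
  fixes a b :: "'a::field poly"
  assumes m: "m \<ge> 1" and da: "degree a < m" and db: "degree b < m"
  shows "euc m a b = coeff ((a * barpoly m b) mod xm1 m) 0"
proof -
  have d: "degree (a * barpoly m b) < 2 * m"
    using degree_mult_le[of a "barpoly m b"] degree_barpoly[of m b] da by linarith
  have c0: "coeff (a * barpoly m b) 0 = 0"
    using db by (simp add: coeff_mult coeff_barpoly coeff_eq_0)
  have "coeff (a * barpoly m b) m = (\<Sum>i\<le>m. coeff a i * coeff b i)"
    by (simp add: coeff_mult coeff_barpoly)
  also have "\<dots> = (\<Sum>i<m. coeff a i * coeff b i)"
    using da by (simp add: lessThan_Suc_atMost[symmetric] coeff_eq_0)
  finally show ?thesis
    using mod_xm1_coeff0[OF m d] c0 by (simp add: euc_def)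
qed



lemma of_nat_card_zero: "of_nat (card (UNIV :: 'a::{finite,ring_1} set)) = (0::'a)"
proof -
  have "(\<Sum>x\<in>UNIV. x + 1) = (\<Sum>x\<in>(UNIV::'a set). x)"
    by (rule sum.reindex_bij_witness[of _ "\<lambda>x. x - 1" "\<lambda>x. x + 1"]) auto
  then show ?thesis by (simp add: sum.distrib)
qed

lemma of_nat_m_nz:
  assumes "coprime (card (UNIV :: 'a::{finite,field} set)) m"
  shows "of_nat m \<noteq> (0::'a)"
proof
  assume "of_nat m = (0::'a)"
  then have "CHAR('a) dvd m" by (simp add: of_nat_eq_0_iff_char_dvd)
  moreover have "CHAR('a) dvd card (UNIV :: 'a set)"
    using of_nat_card_zero[where 'a='a] by (simp add: of_nat_eq_0_iff_char_dvd)
  ultimately have "CHAR('a) dvd 1" using assms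
    by (meson coprime_common_divisor)
  then have "CHAR('a) = 1" by simp
  then show False using of_nat_CHAR[where 'a='a] by simp
qed

lemma sqfree_xm1:
  fixes h :: "'a::field poly"
  assumes m: "m \<ge> 1" and c: "of_nat m \<noteq> (0::'a)" and d: "h * h dvd xm1 m"
  shows "is_unit h"
proof -
  obtain w where "xm1 m = h * h * w" using d by (rule dvdE)
  then have X: "xm1 m = h * (h * w)" by (simp add: mult.assoc)
  have "pderiv (xm1 m) = h * pderiv (h * w) + (h * w) * pderiv h"
    unfolding X by (rule pderiv_mult)
  then have "h dvd pderiv (xm1 m)" by (metis dvd_add dvd_mult2 dvd_triv_left mult.commute)
  moreover have "pderiv (xm1 m :: 'a poly) = smult (of_nat m) (monom 1 (m - 1))"
    unfolding xm1_def by (simp add: pderiv_diff pderiv_monom smult_monom)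
  ultimately have "h dvd smult (of_nat m) (monom 1 (m - 1))" by simp
  then have h1: "h dvd monom 1 (m - 1)" using c by (simp add: dvd_smult_iff)
  have "monom 1 m = [:0,1:] * monom (1::'a) (m - 1)"
    using m by (cases m) (auto simp: monom_altdef)
  then have "h dvd monom 1 m" using h1 by (metis dvd_mult2 mult.commute)
  moreover have "h dvd monom 1 m - 1" using X by (simp add: xm1_def)
  ultimately have "h dvd monom 1 m - (monom 1 m - 1)" by (rule dvd_diff)
  then have "h dvd 1" by simp
  then show ?thesis by simp
qed

lemma coprime_monom:
  fixes p :: "'a::field_gcd poly"
  assumes "coeff p 0 \<noteq> 0"
  shows "coprime p (monom 1 k)"
proof -
  have N: "\<not> [:0,1:] dvd p" using assms by (simp add: dvd_iff_poly_eq_0 poly_0_coeff_0)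
  have P: "prime_elem ([:0,1:] :: 'a poly)"
    by (rule prime_elem_linear_field_poly) simp
  have "coprime p ([:0,1:] ^ k)"
    by (rule prime_elem_imp_power_coprime[OF P N])
  then show ?thesis unfolding monom_altdef smult_1_left .
qed



lemma deg_mod_xm1: "m \<ge> 1 \<Longrightarrow> degree (p mod xm1 m :: 'a::field poly) < m"
  using degree_mod_less[of "xm1 m" p] xm1_nz[of m] degree_xm1[of m, where 'a='a]
  by (metis degree_0 less_le_trans zero_less_one)

lemma dvd_xm1_coeff0:
  assumes "m \<ge> 1" "p dvd (xm1 m :: 'a::field poly)" shows "coeff p 0 \<noteq> 0"
proof
  assume "coeff p 0 = 0"
  then have "poly p 0 = 0" by (simp add: poly_0_coeff_0)
  moreover obtain k where "xm1 m = p * k" using assms(2) by (rule dvdE)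
  ultimately have "poly (xm1 m :: 'a poly) 0 = 0" by simp
  then show False using poly_xm1_0[OF assms(1), where 'a='a] by simp
qed

lemma reflect_dvd:
  fixes a b :: "'a::field poly"
  assumes "a dvd b" shows "reflect_poly a dvd reflect_poly b"
  using assms by (metis dvdE dvd_triv_left reflect_poly_mult)

theorem lemma5p5:
  fixes m :: nat
    and g11 g12 g22 :: "'a::{finite, field_gcd} poly"
  assumes "m \<ge> 1"
    and "coprime (card (UNIV :: 'a set)) m"
    and "g11 dvd xm1 m"
    and "g22 dvd xm1 m"
    and "degree g12 < degree g22"
    and "g11 * g22 dvd xm1 m * g12"
    and "self_reciprocal (gcd g11 g22)"
    and "self_reciprocal (xm1 m div lcm g11 g22)"
    and "gcd (gcd (g22 div gcd g11 g22) (reflect_poly (g22 div gcd g11 g22)))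
             (g11 * barpoly m g12 - g12 * barpoly m g11) \<noteq> 1"
  shows "\<not> symplectic_LCD m (qc_code m g11 g12 g22)"
proof
  assume LCD: "symplectic_LCD m (qc_code m g11 g12 g22)"
  note m = assms(1)
  define X where "X = (xm1 m :: 'a poly)"
  define g where "g = gcd g11 g22"
  define g22' where "g22' = g22 div g"
  define r where "r = gcd g22' (reflect_poly g22')"
  define E where "E = g11 * barpoly m g12 - g12 * barpoly m g11"
  define h where "h = gcd r E"
  have X0: "X \<noteq> 0" unfolding X_def using xm1_nz[OF m] .
  have dX: "degree X = m" unfolding X_def using degree_xm1[OF m] .
  have cnz: "of_nat m \<noteq> (0::'a)" using of_nat_m_nz[OF assms(2)] .
  have g11X: "g11 dvd X" and g22X: "g22 dvd X" using assms(3,4) by (simp_all add: X_def)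
  have g22nz: "g22 \<noteq> 0" using g22X X0 by auto
  have g11nz: "g11 \<noteq> 0" using g11X X0 by auto
  have gdvd: "g dvd g22" unfolding g_def by simp
  have g22eq: "g22 = g * g22'" unfolding g22'_def using gdvd by simp
  have g22'dvd: "g22' dvd g22" using g22eq by simp
  have g22'X: "g22' dvd X" using g22'dvd g22X by (rule dvd_trans)
  have g22'nz: "g22' \<noteq> 0" using g22eq g22nz by auto
  have c22: "coeff g22' 0 \<noteq> 0" using dvd_xm1_coeff0[OF m] g22'X by (simp add: X_def)
  have rnz: "r \<noteq> 0" unfolding r_def using g22'nz by simp
  have hnz: "h \<noteq> 0" unfolding h_def using rnz by simp
  have h_g22': "h dvd g22'" and h_rg22': "h dvd reflect_poly g22'" and hE: "h dvd E"
    unfolding h_def r_def by (meson dvd_trans gcd_dvd1 gcd_dvd2)+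
  have hnu: "\<not> is_unit h"
    using assms(9) unfolding h_def r_def E_def g22'_def g_def
    by (simp add: coprime_iff_gcd_eq_1)
  define d where "d = degree h"
  have dpos: "d > 0" using hnu hnz is_unit_iff_degree d_def by auto
  have hX: "h dvd X" using h_g22' g22'X by (rule dvd_trans)
  obtain u where Xhu: "X = h * u" using hX by (rule dvdE)
  have unz: "u \<noteq> 0" using Xhu X0 by auto
  have du: "degree u = m - d" and dm: "d \<le> m"
    using degree_mult_eq[OF hnz unz] Xhu dX d_def by auto
  have rh_g22: "reflect_poly h dvd g22"
  proof -
    have "reflect_poly h dvd reflect_poly (reflect_poly g22')" using h_rg22' by (rule reflect_dvd)
    then have "reflect_poly h dvd g22'" using c22 by simp
    then show ?thesis using g22'dvd by (rule dvd_trans)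
  qed
  have h_g11: "\<not> h dvd g11"
  proof
    assume "h dvd g11"
    moreover have "h dvd g22" using h_g22' g22'dvd by (rule dvd_trans)
    ultimately have "h dvd g" unfolding g_def by simp
    then have "h * h dvd g * g22'" using h_g22' by (rule mult_dvd_mono)
    then have "h * h dvd xm1 m" using g22eq g22X X_def by auto
    then have "is_unit h" using sqfree_xm1[OF m cnz] by blast
    then show False using hnu by simp
  qed
  have dg11: "degree g11 \<le> m" using g11X X0 dX by (metis dvd_imp_degree_le)
  have dg22: "degree g22 \<le> m" using g22X X0 dX by (metis dvd_imp_degree_le)
  have dg12: "degree g12 \<le> m" using dg22 assms(5) by linarith
  have rh_E: "reflect_poly h dvd E"
  proof (cases "E = 0")
    case True then show ?thesis by simp
  next
    case False
    obtain w where Ew: "E = h * w" using hE by (rule dvdE)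
    have wnz: "w \<noteq> 0" using False Ew by auto
    have dE: "degree E \<le> m + m"
    proof -
      have "degree (g11 * barpoly m g12) \<le> m + m"
        using degree_mult_le[of g11 "barpoly m g12"] degree_barpoly[of m g12] dg11 by linarith
      moreover have "degree (g12 * barpoly m g11) \<le> m + m"
        using degree_mult_le[of g12 "barpoly m g11"] degree_barpoly[of m g11] dg12 by linarith
      ultimately show ?thesis unfolding E_def by (meson degree_diff_le)
    qed
    have dw: "degree w \<le> m + m - d"
      using dE degree_mult_eq[OF hnz wnz] Ew d_def by auto
    have "barpoly (m + m) E = barpoly m g11 * barpoly m (barpoly m g12) - barpoly m g12 * barpoly m (barpoly m g11)"
      unfolding E_def barpoly_diff
      using barpoly_mult[OF dg11 degree_barpoly[of m g12]] barpoly_mult[OF dg12 degree_barpoly[of m g11]]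
      by simp
    also have "\<dots> = - E"
      unfolding E_def using barpoly_barpoly[OF dg11] barpoly_barpoly[OF dg12] by (simp add: algebra_simps)
    finally have e1: "barpoly (m + m) E = - E" .
    have "barpoly (d + (m + m - d)) (h * w) = barpoly d h * barpoly (m + m - d) w"
      using barpoly_mult[of h d w "m + m - d"] dw d_def by simp
    moreover have "barpoly d h = reflect_poly h" using barpoly_reflect[of h d] d_def by simp
    moreover have "d + (m + m - d) = m + m" using dm by simp
    ultimately have "barpoly (m + m) E = reflect_poly h * barpoly (m + m - d) w" using Ew by simp
    then have "reflect_poly h dvd - E" using e1 by (metis dvd_triv_left)
    then show ?thesis by simp
  qed
  have rhnz: "reflect_poly h \<noteq> 0" using hnz by simp
  have cop: "coprime (reflect_poly h) (monom 1 (m - d))"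
    by (rule coprime_monom) (use hnz in simp)
  have rX: "reflect_poly X = - X" using reflect_xm1[OF m] by (simp add: X_def)
  have ruh: "reflect_poly u * reflect_poly h = - X"
  proof -
    have "reflect_poly (h * u) = - (h * u)" using rX unfolding Xhu .
    then show ?thesis unfolding Xhu by (simp add: reflect_poly_mult mult.commute)
  qed
  have decomp: "\<exists>c y. (u * f) mod X = u * c \<and> degree c \<le> d \<and>
        monom 1 (m - d) * barpoly d c = barpoly m f - reflect_poly h * y \<and>
        barpoly m ((u * f) mod X) = reflect_poly u * barpoly d c"
    if df: "degree f \<le> m" for f
  proof -
    define q where "q = (u * f) div X"
    define c where "c = f - h * q"
    have bm: "(u * f) mod X = u * c"
    proof -
      have "(u * f) mod X = u * f - q * X" unfolding q_def by (simp add: mod_div_mult_eq[symmetric] algebra_simps)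
      then show ?thesis unfolding c_def Xhu by (simp add: algebra_simps)
    qed
    have dc: "degree c \<le> d"
    proof (cases "c = 0")
      case False
      have "degree ((u * f) mod X) < m" using deg_mod_xm1[OF m] X_def by simp
      then have "degree u + degree c < m" using bm degree_mult_eq[OF unz False] by simp
      then show ?thesis using du by linarith
    qed simp
    have dq: "degree q \<le> m - d"
    proof (cases "q = 0")
      case False
      have "h * q = f - c" unfolding c_def by simp
      then have "degree (h * q) \<le> m" using df dc dm by (metis degree_diff_le le_trans)
      then show ?thesis using degree_mult_eq[OF hnz False] d_def by simp
    qed simp
    have "monom 1 (m - d) * barpoly d c = barpoly (d + (m - d)) c"
      using barpoly_shift[OF dc] by simp
    also have "\<dots> = barpoly m c" using dm by simp
    also have "\<dots> = barpoly m f - barpoly m (h * q)" unfolding c_def barpoly_diff ..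
    also have "barpoly m (h * q) = barpoly (d + (m - d)) (h * q)" using dm by simp
    also have "\<dots> = barpoly d h * barpoly (m - d) q" using barpoly_mult[of h d q "m - d"] dq d_def by simp
    also have "barpoly d h = reflect_poly h" using barpoly_reflect[of h d] d_def by simp
    finally have e1: "monom 1 (m - d) * barpoly d c = barpoly m f - reflect_poly h * barpoly (m - d) q" .
    have "barpoly m ((u * f) mod X) = barpoly ((m - d) + d) (u * c)" using bm dm by simp
    also have "\<dots> = barpoly (m - d) u * barpoly d c" using barpoly_mult[of u "m - d" c d] du dc by simp
    also have "barpoly (m - d) u = reflect_poly u" using barpoly_reflect[of u "m - d"] du by simp
    finally show ?thesis using bm dc e1 by blast
  qed
  obtain c1 y1 where c1: "(u * g11) mod X = u * c1" "degree c1 \<le> d"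
      "monom 1 (m - d) * barpoly d c1 = barpoly m g11 - reflect_poly h * y1"
      "barpoly m ((u * g11) mod X) = reflect_poly u * barpoly d c1"
    using decomp[OF dg11] by blast
  obtain c2 y2 where c2: "(u * g12) mod X = u * c2" "degree c2 \<le> d"
      "monom 1 (m - d) * barpoly d c2 = barpoly m g12 - reflect_poly h * y2"
      "barpoly m ((u * g12) mod X) = reflect_poly u * barpoly d c2"
    using decomp[OF dg12] by blast
  define V where "V = g11 * barpoly d c2 - g12 * barpoly d c1"
  have rhV: "reflect_poly h dvd V"
  proof -
    have e1: "barpoly m g11 = monom 1 (m - d) * barpoly d c1 + reflect_poly h * y1"
      using c1(3) by (simp add: eq_diff_eq)
    have e2: "barpoly m g12 = monom 1 (m - d) * barpoly d c2 + reflect_poly h * y2"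
      using c2(3) by (simp add: eq_diff_eq)
    have "monom 1 (m - d) * V = E - reflect_poly h * (g11 * y2 - g12 * y1)"
      unfolding V_def E_def e1 e2 by (simp add: algebra_simps)
    then have "reflect_poly h dvd monom 1 (m - d) * V" using rh_E by (metis dvd_diff dvd_triv_left)
    then show ?thesis using cop by (simp add: coprime_dvd_mult_right_iff)
  qed
  define b where "b = ((u * g11) mod X, (u * g12) mod X)"
  have bC: "b \<in> qc_code m g11 g12 g22"
    unfolding qc_code_def b_def X_def by (rule CollectI, rule exI[of _ u], rule exI[of _ 0]) simp
  have bnz: "b \<noteq> (0, 0)"
  proof
    assume "b = (0, 0)"
    then have "X dvd u * g11" unfolding b_def by (simp add: mod_eq_0_iff_dvd)
    then have "h * u dvd g11 * u" using Xhu by (simp add: mult.commute)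
    then have "h dvd g11" using unz by simp
    then show False using h_g11 by simp
  qed
  have bR: "b \<in> Rset m \<times> Rset m"
    unfolding b_def Rset_def X_def using deg_mod_xm1[OF m, where 'a='a] by simp
  have orth: "symp m a b = 0" if aC: "a \<in> qc_code m g11 g12 g22" for a
  proof -
    obtain s t where a: "a = ((s * g11) mod X, (s * g12 + t * g22) mod X)"
      using aC unfolding qc_code_def X_def by blast
    define a1 where "a1 = (s * g11) mod X"
    define a2 where "a2 = (s * g12 + t * g22) mod X"
    define b1 where "b1 = (u * g11) mod X"
    define b2 where "b2 = (u * g12) mod X"
    have da1: "degree a1 < m" and da2: "degree a2 < m" and db1: "degree b1 < m" and db2: "degree b2 < m"
      unfolding a1_def a2_def b1_def b2_def X_def using deg_mod_xm1[OF m, where 'a='a] by simp_all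
    have "symp m a b = euc m a1 b2 - euc m a2 b1"
      unfolding symp_def a b_def a1_def a2_def b1_def b2_def by simp
    also have "\<dots> = coeff ((a1 * barpoly m b2 - a2 * barpoly m b1) mod X) 0"
      unfolding euc_as_mod[OF m da1 db2] euc_as_mod[OF m da2 db1] X_def
      by (simp add: poly_mod_diff_left)
    also have "(a1 * barpoly m b2 - a2 * barpoly m b1) mod X = 0"
    proof -
      define p1 where "p1 = (s * g11) div X"
      define p2 where "p2 = (s * g12 + t * g22) div X"
      have a1e: "a1 = s * g11 - p1 * X" unfolding a1_def p1_def by (simp add: mod_div_mult_eq[symmetric] algebra_simps)
      have a2e: "a2 = s * g12 + t * g22 - p2 * X" unfolding a2_def p2_def by (simp add: mod_div_mult_eq[symmetric] algebra_simps)
      have Z: "a1 * barpoly m b2 - a2 * barpoly m b1 =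
          reflect_poly u * (s * V - t * g22 * barpoly d c1)
          - X * (p1 * reflect_poly u * barpoly d c2 - p2 * reflect_poly u * barpoly d c1)"
        unfolding a1e a2e b1_def b2_def c1(4) c2(4) V_def by (simp add: algebra_simps)
      have "reflect_poly h dvd s * V - t * g22 * barpoly d c1"
        using rhV rh_g22 by (simp add: dvd_diff)
      then obtain W where W: "s * V - t * g22 * barpoly d c1 = reflect_poly h * W" by (rule dvdE)
      have "reflect_poly u * (s * V - t * g22 * barpoly d c1) = - X * W"
        unfolding W using ruh by (metis mult.assoc)
      then have "X dvd a1 * barpoly m b2 - a2 * barpoly m b1" unfolding Z
        by (metis dvd_diff dvd_triv_left minus_mult_left dvd_minus_iff)
      then show ?thesis by (simp add: mod_eq_0_iff_dvd)
    qed
    finally show ?thesis by simp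
  qed
  have "b \<in> symp_dual m (qc_code m g11 g12 g22)"
    unfolding symp_dual_def using bR orth by blast
  then have "b \<in> qc_code m g11 g12 g22 \<inter> symp_dual m (qc_code m g11 g12 g22)" using bC by blast
  then show False using LCD bnz unfolding symplectic_LCD_def by blast
qed

end
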